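(* Let $X$ be a $\mathbf B$-valued random variable with $\mathbb E\|X\|\ln^\delta(1+\|X\|)<\infty$ for some $\delta>0$. Then \[ \sum_{n=1}^{\infty}\frac{1}{n}\int_{\min\{u_n,n\}}^{n}\mathbb{P}(\|X\|>t)\,dt<\infty . \]
   Context: $(\mathbf{B},\|\cdot\|)$ is a real separable Banach space. For $n\ge1$, $u_n=\inf\{t\in\mathbb R:\ \mathbb P(\|X\|>t)<1/n\}$ (the quantile of order $1-1/n$ of $\|X\|$). *)

theory Defs
  imports "HOL-Probability.Probability"
begin

definition quantile_u :: "'a measure \<Rightarrow> ('a \<Rightarrow> 'b::real_normed_vector) \<Rightarrow> nat \<Rightarrow> real" where
  "quantile_u M X n = Inf {t::real. measure M {\<omega> \<in> space M. norm (X \<omega>) > t} < 1 / real n}"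

end

theory Submission
  imports Defs "HOL-Probability.Probability" "HOL-Library.Discrete_Functions"
begin

lemma ln_le_powr_div:
  fixes x d :: real assumes "x > 0" "d > 0"
  shows "ln x \<le> x powr d / d"
proof -
  have "ln (x powr d) \<le> x powr d - 1" using assms by (intro ln_le_minus_one) simp
  hence "d * ln x \<le> x powr d" using assms by (simp add: ln_powr)
  thus ?thesis using assms by (simp add: field_simps)
qed

lemma xlog_bound:
  fixes q d :: real and j :: nat assumes q: "q \<ge> 0" and d: "d > 0"
  shows "q * max 0 (- log 2 q) \<le> 3 / (d * ln 2) * (q * (real j + 1) powr d) + 2 / ln 2 * (real j + 1) powr (-3/2)"
proof -
  have R0: "0 \<le> 3 / (d * ln 2) * (q * (real j + 1) powr d) + 2 / ln 2 * (real j + 1) powr (-3/2)"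
    using q d by (intro add_nonneg_nonneg mult_nonneg_nonneg) auto
  show ?thesis
  proof (cases "q = 0 \<or> - log 2 q \<le> 0")
    case True thus ?thesis using R0 by auto
  next
    case False
    hence qp: "q > 0" and ml: "max 0 (- log 2 q) = - ln q / ln 2" using q by (auto simp: log_def)
    show ?thesis
    proof (cases "q * (real j + 1) ^ 3 \<ge> 1")
      case True
      have "ln 1 \<le> ln (q * (real j + 1) ^ 3)" using True qp by (subst ln_le_cancel_iff) auto
      hence "- ln q \<le> 3 * ln (real j + 1)" using qp by (simp add: ln_mult ln_realpow)
      also have "\<dots> \<le> 3 * ((real j + 1) powr d / d)" using ln_le_powr_div[of "real j + 1" d] d by simp
      finally have "- ln q / ln 2 \<le> 3 / (d * ln 2) * (real j + 1) powr d"
        by (simp add: divide_right_mono field_simps)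
      hence "q * (- ln q / ln 2) \<le> q * (3 / (d * ln 2) * (real j + 1) powr d)"
        using qp by (intro mult_left_mono) auto
      thus ?thesis using ml q d by (simp add: mult_ac) (smt (verit) divide_nonneg_nonneg ln_gt_zero mult_nonneg_nonneg powr_ge_zero)
    next
      case False
      have "ln (1 / sqrt q) \<le> 1 / sqrt q - 1" using qp by (intro ln_le_minus_one) simp
      hence "- ln q \<le> 2 / sqrt q" using qp by (simp add: ln_div ln_sqrt)
      hence "q * (- ln q) \<le> q * (2 / sqrt q)" using qp by (intro mult_left_mono) auto
      also have "\<dots> = 2 * sqrt q" using qp by (simp add: field_simps)
      also have "sqrt q \<le> (real j + 1) powr (-3/2)"
      proof -
        have "q \<le> 1 / (real j + 1) ^ 3" using False by (simp add: field_simps)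
        hence "sqrt q \<le> sqrt (1 / (real j + 1) ^ 3)" by simp
        also have "\<dots> = (real j + 1) powr (-3/2)"
        proof -
          have x: "(0::real) < real j + 1" by simp
          have "1 / (real j + 1) ^ 3 = (real j + 1) powr (-3)"
            using x by (simp add: powr_minus powr_realpow divide_inverse)
          hence "sqrt (1 / (real j + 1) ^ 3) = ((real j + 1) powr (-3)) powr (1/2)"
            by (simp add: powr_half_sqrt)
          also have "\<dots> = (real j + 1) powr (-3/2)" by (simp add: powr_powr)
          finally show ?thesis .
        qed
        finally show ?thesis .
      qed
      finally have "q * (- ln q) / ln 2 \<le> 2 / ln 2 * (real j + 1) powr (-3/2)"
        by (simp add: divide_right_mono field_simps)
      thus ?thesis using ml q d by (smt (verit) divide_nonneg_nonneg ln_gt_zero mult_nonneg_nonneg powr_ge_zero times_divide_eq_right)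
    qed
  qed
qed

lemma geom_tail_eq:
  "(\<Sum>k<K. if m \<le> k then (1/2::real)^k else 0) = (if K \<le> m then 0 else 2*(1/2)^m - 2*(1/2)^K)"
proof (induction K)
  case 0 then show ?case by simp
next
  case (Suc K)
  show ?case
  proof (cases "Suc K \<le> m")
    case True thus ?thesis using Suc by simp
  next
    case False
    hence "m \<le> K" by simp
    thus ?thesis using Suc by (cases "K = m") auto
  qed
qed

lemma geom_tail_le: "(\<Sum>k<K. if m \<le> k then (1/2::real)^k else 0) \<le> 2*(1/2)^m"
  by (subst geom_tail_eq) auto

lemma min_sum_bound:
  fixes q :: real assumes q: "q \<ge> 0"
  shows "(\<Sum>k<K. if j \<le> k then min q (2^j * (1/2)^k) else 0) \<le> q * (3 + max 0 (- log 2 q))"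
proof (cases "q = 0")
  case True
  have "(\<Sum>k<K. if j \<le> k then min q (2^j * (1/2)^k) else 0) = (\<Sum>k<K. 0::real)"
    using True by (intro sum.cong) (auto simp: min_def)
  thus ?thesis using True by simp
next
  case False
  hence qp: "q > 0" using q by simp
  define L where "L = nat \<lceil>- log 2 q\<rceil>"
  define m where "m = j + L"
  have t: "(if j \<le> k then min q (2^j * (1/2)^k) else 0)
       \<le> (if k \<in> {j..<m} then q else 0) + 2^j * (if m \<le> k then (1/2::real)^k else 0)" for k
  proof (cases "j \<le> k")
    case True
    show ?thesis
    proof (cases "k < m")
      case True
      thus ?thesis using \<open>j \<le> k\<close> by (simp add: min_def)
    next
      case False
      thus ?thesis using \<open>j \<le> k\<close> by (simp add: min_def)
    qed
  next
    case False
    thus ?thesis using qp by auto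
  qed
  have s1: "(\<Sum>k<K. if j \<le> k then min q (2^j * (1/2)^k) else 0)
     \<le> (\<Sum>k<K. if k \<in> {j..<m} then q else 0) + 2^j * (\<Sum>k<K. if m \<le> k then (1/2::real)^k else 0)"
    using sum_mono[of "{..<K}", OF t] by (simp add: sum.distrib sum_distrib_left)
  have s2: "(\<Sum>k<K. if k \<in> {j..<m} then q else 0) \<le> real L * q"
  proof -
    have e: "(\<Sum>k<K. if k \<in> {j..<m} then q else 0) = (\<Sum>k\<in>{..<K} \<inter> {j..<m}. q)"
      by (rule sum.inter_restrict[symmetric]) simp
    have "card ({..<K} \<inter> {j..<m}) \<le> card {j..<m}" by (intro card_mono) auto
    thus ?thesis unfolding e using qp by (simp add: m_def)
  qed
  have s3: "2^j * (\<Sum>k<K. if m \<le> k then (1/2::real)^k else 0) \<le> 2^j * (2*(1/2)^m)"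
    by (intro mult_left_mono geom_tail_le) simp
  have s4: "(2::real)^j * (2*(1/2)^m) = 2 * (1/2)^L"
    by (simp add: m_def power_add power_one_over)
  have s5: "(1/2::real)^L \<le> q"
  proof -
    have "(1/2::real)^L = inverse (2^L)" by (simp add: power_one_over inverse_eq_divide)
    also have "\<dots> = inverse (2 powr real L)" by (simp add: powr_realpow)
    also have "\<dots> = 2 powr (- real L)" by (rule powr_minus[symmetric])
    also have "\<dots> \<le> 2 powr (log 2 q)"
    proof (rule powr_mono)
      have "- log 2 q \<le> real L" unfolding L_def by (rule real_nat_ceiling_ge)
      thus "- real L \<le> log 2 q" by linarith
    qed simp
    also have "\<dots> = q" using qp by (simp add: powr_log_cancel)
    finally show ?thesis .
  qed
  have "(\<Sum>k<K. if j \<le> k then min q (2^j * (1/2)^k) else 0) \<le> real L * q + 2 * q"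
    using s1 s2 s3 s4 s5 by linarith
  also have "real L \<le> max 0 (- log 2 q) + 1"
  proof (cases "- log 2 q \<le> 0")
    case True
    hence "\<lceil>- log 2 q\<rceil> \<le> 0" by (simp add: ceiling_le_iff)
    hence "L = 0" unfolding L_def by simp
    thus ?thesis by simp
  next
    case False
    hence "real L = real_of_int \<lceil>- log 2 q\<rceil>" unfolding L_def by simp
    also have "\<dots> \<le> - log 2 q + 1" by (rule of_int_ceiling_le_add_one)
    finally show ?thesis by simp
  qed
  hence "real L * q \<le> (max 0 (- log 2 q) + 1) * q" using qp by (intro mult_right_mono) auto
  hence "real L * q + 2 * q \<le> q * (3 + max 0 (- log 2 q))" by (simp add: algebra_simps)
  finally show ?thesis .
qed

lemma geom_indic_sum:
  fixes y :: real assumes "y \<ge> 0"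
  shows "(\<Sum>j<K. if 2^j < y then (2::real)^j else 0) \<le> 2*y \<and> (\<Sum>j<K. if 2^j < y then (2::real)^j else 0) \<le> 2^K - 1"
proof (induction K)
  case 0 thus ?case using assms by simp
next
  case (Suc K)
  show ?case
  proof (cases "2^K < y")
    case True thus ?thesis using Suc by auto
  next
    case False
    thus ?thesis using Suc by (auto simp: le_diff_eq) (smt (verit) one_le_power)
  qed
qed

lemma pointwise_bound:
  fixes y d :: real assumes y: "y \<ge> 0" and d: "d > 0"
  shows "(\<Sum>j<K. if 2^j < y then (2::real)^j * (real j + 1) powr d else 0)
     \<le> 2 * (2 / ln 2) powr d * (y * ln (1 + y) powr d)"
proof (cases "y \<le> 1")
  case True
  have "(\<Sum>j<K. if 2^j < y then (2::real)^j * (real j + 1) powr d else 0) = (\<Sum>j<K. 0)"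
  proof (intro sum.cong refl)
    fix j :: nat
    have "(1::real) \<le> 2^j" by simp
    hence "\<not> (2::real)^j < y" using True by linarith
    thus "(if 2^j < y then (2::real)^j * (real j + 1) powr d else 0) = 0" by simp
  qed
  thus ?thesis using y by simp
next
  case False
  hence y1: "y > 1" by simp
  define R where "R = (log 2 y + 1) powr d"
  have t: "(if 2^j < y then (2::real)^j * (real j + 1) powr d else 0) \<le> R * (if 2^j < y then (2::real)^j else 0)" for j
  proof (cases "2^j < y")
    case True
    have "real j = log 2 (2^j)" by (simp add: log_nat_power)
    also have "\<dots> < log 2 y" using True y1 by (subst log_less_cancel_iff) auto
    finally have "(real j + 1) powr d \<le> R" unfolding R_def using d by (intro powr_mono2) auto
    thus ?thesis using True by simp
  qed (simp add: R_def)
  have "(\<Sum>j<K. if 2^j < y then (2::real)^j * (real j + 1) powr d else 0) \<le> (\<Sum>j<K. R * (if 2^j < y then (2::real)^j else 0))"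
    by (intro sum_mono t)
  also have "\<dots> = R * (\<Sum>j<K. if 2^j < y then (2::real)^j else 0)" by (simp add: sum_distrib_left)
  also have "\<dots> \<le> R * (2*y)" using geom_indic_sum[OF y, of K] by (intro mult_left_mono) (auto simp: R_def)
  also have "R \<le> (2 / ln 2) powr d * ln (1 + y) powr d"
  proof -
    have l2: "ln 2 \<le> ln (1+y)" using y1 by simp
    have "log 2 y + 1 \<le> 2 / ln 2 * ln (1 + y)"
    proof -
      have "ln y \<le> ln (1+y)" using y1 by simp
      hence "log 2 y \<le> ln (1+y) / ln 2" by (simp add: log_def divide_right_mono)
      moreover have "1 \<le> ln (1+y) / ln 2" using l2 by simp
      moreover have "2 / ln 2 * ln (1 + y) = ln (1+y) / ln 2 + ln (1+y) / ln 2" by simp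
      ultimately show ?thesis by linarith
    qed
    moreover have "0 \<le> log 2 y + 1" using y1 by simp
    ultimately have "R \<le> (2 / ln 2 * ln (1 + y)) powr d" unfolding R_def using d by (intro powr_mono2) auto
    also have "\<dots> = (2 / ln 2) powr d * ln (1 + y) powr d" using y1 by (subst powr_mult) auto
    finally show ?thesis .
  qed
  hence "R * (2*y) \<le> (2 / ln 2) powr d * ln (1 + y) powr d * (2*y)" using y by (intro mult_right_mono) auto
  finally show ?thesis by (simp add: mult_ac)
qed

lemma tail_summable:
  fixes M :: "'a measure" and X :: "'a \<Rightarrow> 'b::{banach, second_countable_topology}" and d :: real
  assumes P: "prob_space M" and Xm[measurable]: "X \<in> borel_measurable M" and d: "d > 0"
    and I: "integrable M (\<lambda>\<omega>. norm (X \<omega>) * (ln (1 + norm (X \<omega>))) powr d)"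
  shows "summable (\<lambda>j. 2^j * (real j + 1) powr d * measure M {\<omega> \<in> space M. norm (X \<omega>) > 2^j})"
proof -
  interpret prob_space M by (rule P)
  define C where "C = 2 * (2 / ln 2) powr d"
  define A where "A j = {\<omega> \<in> space M. norm (X \<omega>) > 2^j}" for j :: nat
  define c where "c j = (2::real)^j * (real j + 1) powr d" for j :: nat
  have A[measurable]: "A j \<in> sets M" for j unfolding A_def by measurable
  have c0: "c j \<ge> 0" for j unfolding c_def by simp
  have "(\<Sum>j. ennreal (c j * measure M (A j))) = (\<Sum>j. \<integral>\<^sup>+ \<omega>. ennreal (c j) * indicator (A j) \<omega> \<partial>M)"
    by (intro suminf_cong) (simp add: nn_integral_cmult_indicator emeasure_eq_measure ennreal_mult c0)
  also have "\<dots> = (\<integral>\<^sup>+ \<omega>. (\<Sum>j. ennreal (c j) * indicator (A j) \<omega>) \<partial>M)"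
    by (rule nn_integral_suminf[symmetric]) simp
  also have "\<dots> \<le> (\<integral>\<^sup>+ \<omega>. ennreal (C * (norm (X \<omega>) * (ln (1 + norm (X \<omega>))) powr d)) \<partial>M)"
  proof (intro nn_integral_mono)
    fix \<omega> assume \<omega>: "\<omega> \<in> space M"
    show "(\<Sum>j. ennreal (c j) * indicator (A j) \<omega>) \<le> ennreal (C * (norm (X \<omega>) * (ln (1 + norm (X \<omega>))) powr d))"
    proof (rule suminf_le_const)
      show "summable (\<lambda>j. ennreal (c j) * indicator (A j) \<omega>)" by (rule summableI)
      fix n
      have "(\<Sum>j<n. ennreal (c j) * indicator (A j) \<omega>) = (\<Sum>j<n. ennreal (if 2^j < norm (X \<omega>) then c j else 0))"
        by (intro sum.cong refl) (auto simp: A_def \<omega>)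
      also have "\<dots> = ennreal (\<Sum>j<n. if 2^j < norm (X \<omega>) then c j else 0)"
        by (rule sum_ennreal) (simp add: c0)
      also have "\<dots> \<le> ennreal (C * (norm (X \<omega>) * (ln (1 + norm (X \<omega>))) powr d))"
        using pointwise_bound[OF norm_ge_zero[of "X \<omega>"] d, of n]
        by (intro ennreal_leI) (simp add: C_def c_def if_distrib cong: if_cong)
      finally show "(\<Sum>j<n. ennreal (c j) * indicator (A j) \<omega>) \<le> ennreal (C * (norm (X \<omega>) * (ln (1 + norm (X \<omega>))) powr d))" .
    qed
  qed
  also have "\<dots> = ennreal (integral\<^sup>L M (\<lambda>\<omega>. C * (norm (X \<omega>) * (ln (1 + norm (X \<omega>))) powr d)))"
    by (intro nn_integral_eq_integral integrable_mult_right I) (auto simp: C_def)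
  also have "\<dots> < top" by simp
  finally have "(\<Sum>j. ennreal (c j * measure M (A j))) \<noteq> top" by simp
  hence "summable (\<lambda>j. c j * measure M (A j))" by (intro summable_suminf_not_top) (simp add: c0)
  thus ?thesis by (simp add: c_def A_def)
qed

definition Ftail :: "'a measure \<Rightarrow> ('a \<Rightarrow> 'b::real_normed_vector) \<Rightarrow> real \<Rightarrow> real" where
  "Ftail M X t = measure M {\<omega> \<in> space M. norm (X \<omega>) > t}"

definition Dk :: "'a measure \<Rightarrow> ('a \<Rightarrow> 'b::real_normed_vector) \<Rightarrow> nat \<Rightarrow> real" where
  "Dk M X k = (1/2)^k + (\<Sum>j<Suc k. min (2^j * Ftail M X (2^j)) (2^j * (1/2)^k))"

lemma per_N_bound:
  fixes M :: "'a measure" and X :: "'a \<Rightarrow> 'b::{banach, second_countable_topology}"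
  assumes P: "prob_space M" and Xm[measurable]: "X \<in> borel_measurable M"
    and ex: "\<exists>t. Ftail M X t < 1 / real N" and N: "N \<ge> 1"
  shows "0 \<le> (1 / real N) * (LBINT t = ereal (min (quantile_u M X N) (real N))..ereal (real N). Ftail M X t)
     \<and> (1 / real N) * (LBINT t = ereal (min (quantile_u M X N) (real N))..ereal (real N). Ftail M X t)
        \<le> (1/2)^(floor_log N) * Dk M X (floor_log N)"
proof -
  interpret prob_space M by (rule P)
  define F where "F = Ftail M X"
  have Fmeas: "{\<omega> \<in> space M. norm (X \<omega>) > t} \<in> sets M" for t by measurable
  have Fmono: "F t \<le> F s" if "s \<le> t" for s t
    unfolding F_def Ftail_def using that by (intro finite_measure_mono Fmeas) auto
  have F0: "0 \<le> F t" for t unfolding F_def Ftail_def by simp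
  have Fneg: "F t = 1" if "t < 0" for t
  proof -
    have "{\<omega> \<in> space M. norm (X \<omega>) > t} = space M" using that by (auto intro: less_le_trans[OF _ norm_ge_zero])
    thus ?thesis unfolding F_def Ftail_def using prob_space by simp
  qed
  define S where "S = {t. F t < 1 / real N}"
  have Sne: "S \<noteq> {}" using ex unfolding S_def F_def by auto
  have Slow: "t \<ge> 0" if "t \<in> S" for t
  proof (rule ccontr)
    assume "\<not> t \<ge> 0"
    hence "F t = 1" by (intro Fneg) simp
    moreover have "1 / real N \<le> 1" using N by simp
    ultimately show False using that unfolding S_def by simp
  qed
  have Sbdd: "bdd_below S" using Slow by (intro bdd_belowI) auto
  have u_def: "quantile_u M X N = Inf S" unfolding quantile_u_def S_def F_def Ftail_def by simp
  define a where "a = min (quantile_u M X N) (real N)"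
  have a0: "0 \<le> a" unfolding a_def u_def using Sne Slow by (auto intro: cInf_greatest)
  have aN: "a \<le> real N" unfolding a_def by simp
  have key: "F t < 1 / real N" if "a < t" "t < real N" for t
  proof -
    have "Inf S < t" using that unfolding a_def u_def by simp
    then obtain x where "x \<in> S" "x < t" using cInf_less_iff[OF Sne Sbdd] by auto
    thus ?thesis using Fmono[of x t] unfolding S_def by simp
  qed
  define k where "k = floor_log N"
  have k1: "2^k \<le> N" unfolding k_def using N by (intro floor_log_exp2_le) simp
  have k2: "N < 2 * 2^k" unfolding k_def by (rule floor_log_exp2_gt)
  have "real (2^k) \<le> real N" using k1 by (simp only: of_nat_le_iff)
  hence k1r: "(2::real)^k \<le> real N" by simp
  have "real N < real (2 * 2^k)" using k2 by (simp only: of_nat_less_iff)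
  hence k2r: "real N < 2 * 2^k" by simp
  have invN0: "1 / real N \<le> 1 / 2^k" using k1r N by (intro divide_left_mono) auto
  have invN: "1 / real N \<le> (1/2)^k" using invN0 by (simp add: power_one_over)
  define G where "G t = (1/2)^k * indicator {0<..<1::real} t
      + (\<Sum>j<Suc k. min (F (2^j)) ((1/2)^k) * indicator {2^j..<2^(Suc j)::real} t)" for t
  have Gnn: "0 \<le> G t" for t unfolding G_def using F0 by (intro add_nonneg_nonneg sum_nonneg) auto
  have Gint: "integrable lborel G" unfolding G_def
    by (intro Bochner_Integration.integrable_add Bochner_Integration.integrable_sum integrable_mult_right integrable_real_indicator) auto
  have Gval: "integral\<^sup>L lborel G = Dk M X k"
  proof -
    define c where "c j = min (F (2^j)) ((1/2::real)^k)" for j :: nat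
    have i1: "integrable lborel (\<lambda>t. (1/2::real)^k * indicator {0<..<1::real} t)"
      by (intro integrable_mult_right integrable_real_indicator) auto
    have i2: "integrable lborel (\<lambda>t. c j * indicator {2^j..<2^(Suc j)::real} t)" for j
      by (intro integrable_mult_right integrable_real_indicator) auto
    have e1: "integral\<^sup>L lborel (\<lambda>t. (1/2::real)^k * indicator {0<..<1::real} t) = (1/2)^k * measure lborel {0<..<1::real}"
      by (simp only: integral_mult_right_zero Bochner_Integration.integral_indicator space_lborel space_borel Int_UNIV_right)
    have e2: "integral\<^sup>L lborel (\<lambda>t. c j * indicator {2^j..<2^(Suc j)::real} t) = c j * measure lborel {2^j..<2^(Suc j)::real}" for j
      by (simp only: integral_mult_right_zero Bochner_Integration.integral_indicator space_lborel space_borel Int_UNIV_right)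
    have "integral\<^sup>L lborel G = (1/2)^k * measure lborel {0<..<1::real}
       + (\<Sum>j<Suc k. c j * measure lborel {2^j..<2^(Suc j)::real})"
      unfolding G_def c_def[symmetric]
      apply (subst Bochner_Integration.integral_add)
      apply (rule i1)
      apply (rule Bochner_Integration.integrable_sum, rule i2)
      apply (subst Bochner_Integration.integral_sum)
      apply (rule i2)
      apply (simp only: e1 e2)
      done
    also have "\<dots> = (1/2)^k + (\<Sum>j<Suc k. min (F (2^j)) ((1/2)^k) * 2^j)" by (simp add: c_def)
    also have "\<dots> = Dk M X k" unfolding Dk_def F_def
      by (intro arg_cong2[where f="(+)"] refl sum.cong) (auto simp: min_def mult.commute)
    finally show ?thesis .
  qed
  have pw: "indicator {a<..<real N} t * F t \<le> G t" for t
  proof (cases "t \<in> {a<..<real N}")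
    case False thus ?thesis using Gnn by simp
  next
    case True
    hence t: "a < t" "t < real N" by auto
    have Ft: "F t < (1/2)^k" using key[OF t] invN by simp
    have tpos: "t > 0" using t a0 by simp
    show ?thesis
    proof (cases "t < 1")
      case True
      have "F t \<le> (1/2)^k * indicator {0<..<1::real} t" using True tpos Ft by simp
      also have "\<dots> \<le> G t" unfolding G_def using F0 by (intro add_increasing2 sum_nonneg) auto
      finally show ?thesis using \<open>a < t\<close> \<open>t < real N\<close> by simp
    next
      case False
      define m where "m = nat \<lfloor>t\<rfloor>"
      define j where "j = floor_log m"
      have m1: "m \<ge> 1" unfolding m_def using False by linarith
      have mt: "real m \<le> t" unfolding m_def using tpos by linarith
      have tm: "t < real m + 1" unfolding m_def using tpos by linarith
      have j1: "2^j \<le> m" unfolding j_def using m1 by (intro floor_log_exp2_le) simp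
      have j2: "m < 2 * 2^j" unfolding j_def by (rule floor_log_exp2_gt)
      have "real (2^j) \<le> real m" using j1 by (simp only: of_nat_le_iff)
      hence j1r: "(2::real)^j \<le> t" using mt by (simp only: of_nat_power of_nat_numeral)
      have j2r: "t < 2^(Suc j)"
      proof -
        have "m + 1 \<le> 2 * 2^j" using j2 by simp
        hence "real (m + 1) \<le> real (2 * 2^j)" by (simp only: of_nat_le_iff)
        hence "real m + 1 \<le> 2 * 2^j" by (simp only: of_nat_power of_nat_numeral of_nat_add of_nat_mult of_nat_1)
        thus ?thesis using tm by simp
      qed
      have jk: "j < Suc k"
      proof -
        have "(2::real)^j < 2^(Suc k)" using j1r t(2) k2r by simp
        thus ?thesis by (subst (asm) power_strict_increasing_iff) auto
      qed
      have "F t \<le> min (F (2^j)) ((1/2)^k)" using Fmono[OF j1r] Ft by simp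
      also have "\<dots> = min (F (2^j)) ((1/2)^k) * indicator {2^j..<2^(Suc j)::real} t" using j1r j2r by simp
      also have "\<dots> \<le> (\<Sum>j<Suc k. min (F (2^j)) ((1/2)^k) * indicator {2^j..<2^(Suc j)::real} t)"
        using jk F0 by (intro member_le_sum) auto
      also have "\<dots> \<le> G t" unfolding G_def by simp
      finally show ?thesis using t by simp
    qed
  qed
  define I where "I = (LBINT t = ereal a..ereal (real N). F t)"
  have I_eq: "I = integral\<^sup>L lborel (\<lambda>t. indicator {a<..<real N} t * F t)"
    unfolding I_def interval_lebesgue_integral_def set_lebesgue_integral_def using aN by simp
  have I0: "0 \<le> I" unfolding I_eq using F0 by (intro Bochner_Integration.integral_nonneg) simp
  have IG: "I \<le> Dk M X k"
  proof (cases "integrable lborel (\<lambda>t. indicator {a<..<real N} t * F t)")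
    case True
    have "I \<le> integral\<^sup>L lborel G" unfolding I_eq by (intro Bochner_Integration.integral_mono True Gint pw)
    thus ?thesis using Gval by simp
  next
    case False
    hence "I = 0" unfolding I_eq by (rule not_integrable_integral_eq)
    thus ?thesis using Gval Gnn Bochner_Integration.integral_nonneg[of lborel G] by simp
  qed
  have "1 / real N * I \<le> (1/2)^k * Dk M X k"
    using invN I0 IG by (intro mult_mono) auto
  moreover have "0 \<le> 1 / real N * I" using I0 by simp
  ultimately show ?thesis unfolding I_def a_def F_def k_def by simp
qed

lemma condense_sum: "(\<Sum>N=1..<2^m. h (floor_log N)) = (\<Sum>k<m. 2^k * (h k :: real))"
proof (induction m)
  case (Suc m)
  have "{1..<2^Suc m} = {1..<2^m} \<union> {2^m..<(2^Suc m :: nat)}" by auto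
  also have "(\<Sum>N\<in>\<dots>. h (floor_log N)) = (\<Sum>k<m. 2^k * h k) + (\<Sum>N = 2^m..<2^Suc m. h (floor_log N))"
    by (subst sum.union_disjoint) (insert Suc, auto)
  also have "floor_log N = m" if "N \<in> {2^m..<2^Suc m}" for N using that by (intro floor_log_eqI) simp_all
  hence "(\<Sum>N = 2^m..<2^Suc m. h (floor_log N)) = (\<Sum>(_::nat) = 2^m..<2^Suc m. h m)"
    by (intro sum.cong) simp_all
  also have "\<dots> = 2^m * h m" by simp
  finally show ?case by simp
qed simp

theorem lemma5p6:
  fixes M :: "'a measure" and X :: "'a \<Rightarrow> 'b::{banach, second_countable_topology}"
    and \<delta> :: real
  assumes "prob_space M"
    and "X \<in> borel_measurable M"
    and "\<delta> > 0"
    and "integrable M (\<lambda>\<omega>. norm (X \<omega>) * (ln (1 + norm (X \<omega>))) powr \<delta>)"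
  shows "summable (\<lambda>n::nat. (1 / real (Suc n)) *
           (LBINT t = ereal (min (quantile_u M X (Suc n)) (real (Suc n)))..ereal (real (Suc n)).
              measure M {\<omega> \<in> space M. norm (X \<omega>) > t}))"
proof -
  note P = assms(1) and Xm = assms(2) and d = assms(3) and I = assms(4)
  interpret prob_space M by (rule P)
  define p where "p j = Ftail M X (2^j)" for j :: nat
  define q where "q j = 2^j * p j" for j :: nat
  define c where "c j = (2::real)^j * (real j + 1) powr \<delta>" for j :: nat
  have p0: "0 \<le> p j" for j unfolding p_def Ftail_def by simp
  have q0: "0 \<le> q j" for j unfolding q_def using p0 by simp
  have c1: "1 \<le> c j" for j
  proof -
    have "(1::real) \<le> 2^j" by simp
    moreover have "1 \<le> (real j + 1) powr \<delta>" using d by (intro ge_one_powr_ge_zero) auto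
    ultimately have "1 * 1 \<le> (2::real)^j * (real j + 1) powr \<delta>" by (intro mult_mono) auto
    thus ?thesis unfolding c_def by simp
  qed
  have TS: "summable (\<lambda>j. c j * p j)"
    using tail_summable[OF P Xm d I] by (simp add: c_def p_def Ftail_def)
  have plim: "p \<longlonglongrightarrow> 0"
  proof (rule tendsto_sandwich[of "\<lambda>_. 0" p sequentially "\<lambda>j. c j * p j"])
    show "\<forall>\<^sub>F n in sequentially. 0 \<le> p n" using p0 by simp
    show "\<forall>\<^sub>F n in sequentially. p n \<le> c n * p n"
    proof (intro always_eventually allI)
      fix n
      have "1 * p n \<le> c n * p n" by (rule mult_right_mono[OF c1 p0])
      thus "p n \<le> c n * p n" by simp
    qed
    show "(\<lambda>j. c j * p j) \<longlonglongrightarrow> 0" by (rule summable_LIMSEQ_zero[OF TS])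
  qed simp
  have ex: "\<exists>t. Ftail M X t < 1 / real N" if "N \<ge> 1" for N :: nat
  proof -
    have "\<forall>\<^sub>F j in sequentially. p j < 1 / real N" using that by (intro order_tendstoD(2)[OF plim]) simp
    then obtain j where "p j < 1 / real N" by (auto simp: eventually_sequentially)
    thus ?thesis unfolding p_def by blast
  qed
  define \<Phi> where "\<Phi> j = q j * (3 + max 0 (- log 2 (q j)))" for j
  have \<Phi>0: "0 \<le> \<Phi> j" for j unfolding \<Phi>_def using q0 by simp
  have \<Phi>sum: "summable \<Phi>"
  proof (rule summable_comparison_test')
    define B where "B j = (3 + 3 / (\<delta> * ln 2)) * (c j * p j) + 2 / ln 2 * (real (Suc j)) powr (-3/2)" for j
    have sp: "summable (\<lambda>j. real (Suc j) powr (-3/2))"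
      using summable_real_powr_iff[of "-3/2"] by (subst summable_Suc_iff) simp
    show "summable B" unfolding B_def
      by (intro summable_add summable_mult TS sp)
    fix j :: nat assume "j \<ge> 0"
    have cq: "q j * (real j + 1) powr \<delta> = c j * p j" unfolding q_def c_def by (simp add: mult_ac)
    have g1: "1 \<le> (real j + 1) powr \<delta>" using d by (intro ge_one_powr_ge_zero) auto
    have "q j * 1 \<le> q j * (real j + 1) powr \<delta>" by (rule mult_left_mono[OF g1 q0])
    hence qc: "q j \<le> c j * p j" using cq by simp
    have "\<Phi> j = 3 * q j + q j * max 0 (- log 2 (q j))" unfolding \<Phi>_def by (simp add: algebra_simps)
    also have "\<dots> \<le> 3 * (c j * p j) + (3 / (\<delta> * ln 2) * (c j * p j) + 2 / ln 2 * (real j + 1) powr (-3/2))"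
      using xlog_bound[OF q0[of j] d, of j] qc cq by (simp add: cq)
    also have "\<dots> = B j" unfolding B_def by (simp add: algebra_simps)
    finally show "norm (\<Phi> j) \<le> B j" using \<Phi>0[of j] by simp
  qed
  define a where "a j k = min (q j) (2^j * (1/2)^k)" for j k :: nat
  define S where "S k = (\<Sum>j<Suc k. a j k)" for k
  have a0: "0 \<le> a j k" for j k unfolding a_def using q0 by simp
  have Ssum: "summable S"
  proof (rule summableI_nonneg_bounded)
    show "0 \<le> S k" for k unfolding S_def using a0 by (simp add: sum_nonneg)
    fix K :: nat
    have "(\<Sum>k<K. S k) = (\<Sum>k<K. \<Sum>j<K. if j \<le> k then a j k else 0)"
    proof (intro sum.cong refl)
      fix k assume "k \<in> {..<K}"
      hence "{j \<in> {..<K}. j \<le> k} = {..<Suc k}" by auto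
      hence "(\<Sum>j\<in>{j \<in> {..<K}. j \<le> k}. a j k) = S k" unfolding S_def by simp
      moreover have "(\<Sum>j\<in>{j \<in> {..<K}. j \<le> k}. a j k) = (\<Sum>j<K. if j \<le> k then a j k else 0)"
        by (rule sum.inter_filter) simp
      ultimately show "S k = (\<Sum>j<K. if j \<le> k then a j k else 0)" by simp
    qed
    also have "\<dots> = (\<Sum>j<K. \<Sum>k<K. if j \<le> k then a j k else 0)" by (rule sum.swap)
    also have "\<dots> \<le> (\<Sum>j<K. \<Phi> j)"
      unfolding a_def \<Phi>_def by (intro sum_mono min_sum_bound q0)
    also have "\<dots> \<le> suminf \<Phi>" by (intro sum_le_suminf \<Phi>sum) (auto simp: \<Phi>0)
    finally show "(\<Sum>k<K. S k) \<le> suminf \<Phi>" .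
  qed
  have Deq: "Dk M X k = (1/2)^k + S k" for k unfolding Dk_def S_def a_def q_def p_def by simp
  have D0: "0 \<le> Dk M X k" for k unfolding Deq S_def using a0 by (simp add: sum_nonneg)
  have Dsum: "summable (Dk M X)" unfolding Deq[abs_def]
    by (intro summable_add Ssum summable_geometric) simp
  define f where "f N = (1/2::real)^(floor_log N) * Dk M X (floor_log N)" for N
  have f0: "0 \<le> f N" for N unfolding f_def using D0 by simp
  define T where "T n = (1 / real (Suc n)) *
           (LBINT t = ereal (min (quantile_u M X (Suc n)) (real (Suc n)))..ereal (real (Suc n)).
              measure M {\<omega> \<in> space M. norm (X \<omega>) > t})" for n
  have Tb: "0 \<le> T n \<and> T n \<le> f (Suc n)" for n
    using per_N_bound[OF P Xm ex[of "Suc n"]] unfolding T_def f_def Ftail_def by simp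
  have "summable T"
  proof (rule summableI_nonneg_bounded)
    show "0 \<le> T n" for n using Tb by simp
    fix m
    have "(\<Sum>n<m. T n) \<le> (\<Sum>n<m. f (Suc n))" using Tb by (intro sum_mono) simp
    also have "\<dots> = (\<Sum>N\<in>{1..<Suc m}. f N)"
      using sum.shift_bounds_Suc_ivl[of f 0 m] by (simp add: atLeast0LessThan)
    also have "\<dots> \<le> (\<Sum>N\<in>{1..<2^m}. f N)"
    proof (intro sum_mono2 f0)
      have lm: "Suc m \<le> 2^m" using less_exp[of m] by (simp only: Suc_le_eq)
      show "{1..<Suc m} \<subseteq> {1..<2^m}"
      proof
        fix x assume "x \<in> {1..<Suc m}"
        thus "x \<in> {1..<2^m}" using lm by simp
      qed
    qed simp
    also have "\<dots> = (\<Sum>k<m. 2^k * ((1/2)^k * Dk M X k))" unfolding f_def by (rule condense_sum)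
    also have "\<dots> = (\<Sum>k<m. Dk M X k)" by (simp add: power_one_over)
    also have "\<dots> \<le> suminf (Dk M X)" by (intro sum_le_suminf Dsum) (auto simp: D0)
    finally show "(\<Sum>n<m. T n) \<le> suminf (Dk M X)" .
  qed
  thus ?thesis unfolding T_def .
qed
end
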